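(* Assume $c_0:\mathbb R^d\times\mathbb U\to\mathbb R$ is nonnegative, bounded and continuous and $\mathbb U$ is compact. Then the function $$c(\pi,Q)=\sum_{i=1}^M\inf_{u\in\mathbb U}\int_{Q^{-1}(i)}c_0(x,u)\,\pi(dx)$$ is continuous on $\mathcal S\times\mathcal Q_c$.
   Context: Fix constants $C,C_1>0$. $\mathcal S$ is the set of probability measures on $\mathbb R^d$ admitting a density bounded by $C$ and $C_1$-Lipschitz, with the weak topology (equivalently total variation on $\mathcal S$). $\mathcal M=\{1,\dots,M\}$; an $M$-cell quantizer is a Borel map $Q:\mathbb R^d\to\mathcal M$; $\mathcal Q_c$ is the set of quantizers all of whose cells $Q^{-1}(i)$ are convex (empty set convex). For $P\in\mathcal P(\mathbb R^d)$, $PQ(A\times\{i\})=P(A\cap Q^{-1}(i))$. Topology on $\mathcal Q_c$: fix $P$ with strictly positive density, identify $Q,Q'$ when $PQ=PQ'$, and $Q_n\to Q$ iff $PQ_n\to PQ$ weakly (independent of the choice of $P$). $\mathbb U$ is the reconstruction alphabet (a Borel subset of some Euclidean space). *)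

theory Defs
  imports "HOL-Probability.Probability"
begin

definition weak_conv_seq :: "(nat \<Rightarrow> 'a::topological_space measure) \<Rightarrow> 'a measure \<Rightarrow> bool" where
  "weak_conv_seq \<mu>s \<mu> \<longleftrightarrow>
     (\<forall>g::'a \<Rightarrow> real. continuous_on UNIV g \<and> bounded (range g) \<longrightarrow>
        (\<lambda>n. \<integral>x. g x \<partial>(\<mu>s n)) \<longlonglongrightarrow> (\<integral>x. g x \<partial>\<mu>))"

definition S_class :: "real \<Rightarrow> real \<Rightarrow> 'a::euclidean_space measure set" where
  "S_class C C1 = {\<pi>. prob_space \<pi> \<and>
     (\<exists>f::'a \<Rightarrow> real. f \<in> borel_measurable borel \<and> (\<forall>x. 0 \<le> f x \<and> f x \<le> C) \<and>
        C1-lipschitz_on UNIV f \<and> \<pi> = density lborel (\<lambda>x. ennreal (f x)))}"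

definition Qc :: "nat \<Rightarrow> ('a::euclidean_space \<Rightarrow> nat) set" where
  "Qc M = {Q. Q \<in> borel_measurable borel \<and> (\<forall>x. Q x \<in> {1..M}) \<and>
              (\<forall>i\<in>{1..M}. convex (Q -` {i}))}"

text \<open>The joint measure PQ on R^d x M, PQ(A x {i}) = P(A \<inter> Q^-1(i)).\<close>
definition joint_meas :: "'a::euclidean_space measure \<Rightarrow> ('a \<Rightarrow> nat) \<Rightarrow> ('a \<times> nat) measure" where
  "joint_meas P Q = distr P borel (\<lambda>x. (x, Q x))"

definition cost :: "('a::euclidean_space \<Rightarrow> 'b \<Rightarrow> real) \<Rightarrow> 'b set \<Rightarrow> nat
                    \<Rightarrow> 'a measure \<Rightarrow> ('a \<Rightarrow> nat) \<Rightarrow> real" where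
  "cost c0 U M \<pi> Q = (\<Sum>i=1..M. INF u\<in>U. (LINT x:(Q -` {i})|\<pi>. c0 x u))"

end

theory Submission imports Defs "HOL-Analysis.Analysis" begin

lemma dens_int:
  fixes f :: "'a::euclidean_space \<Rightarrow> real"
  assumes "prob_space (density lborel (\<lambda>x. ennreal (f x)))" "f \<in> borel_measurable borel" "\<And>x. 0 \<le> f x"
  shows "integrable lborel f" "integral\<^sup>L lborel f = 1"
proof -
  interpret prob_space "density lborel (\<lambda>x. ennreal (f x))" by fact
  have "emeasure (density lborel (\<lambda>x. ennreal (f x))) UNIV = 1"
    using emeasure_space_1 by simp
  hence nn: "(\<integral>\<^sup>+x. ennreal (f x) \<partial>lborel) = 1"
    using assms(2) by (simp add: emeasure_density)
  show "integrable lborel f"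
    by (rule integrableI_nonneg) (use assms nn in auto)
  show "integral\<^sup>L lborel f = 1"
    using integral_eq_nn_integral[of f lborel] assms nn by simp
qed

lemma INF_close:
  fixes a b :: "'u \<Rightarrow> real"
  assumes "U \<noteq> {}" "\<And>u. u \<in> U \<Longrightarrow> \<bar>a u - b u\<bar> \<le> d"
    "\<And>u. u \<in> U \<Longrightarrow> 0 \<le> a u" "\<And>u. u \<in> U \<Longrightarrow> 0 \<le> b u"
  shows "\<bar>(INF u\<in>U. a u) - (INF u\<in>U. b u)\<bar> \<le> d"
proof -
  have ba: "bdd_below (a ` U)" by (rule bdd_belowI2[where m=0]) (rule assms(3))
  have bb: "bdd_below (b ` U)" by (rule bdd_belowI2[where m=0]) (rule assms(4))
  have 1: "(INF u\<in>U. a u) \<le> (INF u\<in>U. b u) + d"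
  proof -
    have "(INF u\<in>U. a u) - d \<le> (INF u\<in>U. b u)"
    proof (rule cINF_greatest[OF assms(1)])
      fix u assume u: "u \<in> U"
      have "(INF u\<in>U. a u) \<le> a u" by (rule cINF_lower[OF ba u])
      thus "(INF u\<in>U. a u) - d \<le> b u" using assms(2)[OF u] by linarith
    qed
    thus ?thesis by linarith
  qed
  have 2: "(INF u\<in>U. b u) \<le> (INF u\<in>U. a u) + d"
  proof -
    have "(INF u\<in>U. b u) - d \<le> (INF u\<in>U. a u)"
    proof (rule cINF_greatest[OF assms(1)])
      fix u assume u: "u \<in> U"
      have "(INF u\<in>U. b u) \<le> b u" by (rule cINF_lower[OF bb u])
      thus "(INF u\<in>U. b u) - d \<le> a u" using assms(2)[OF u] by linarith
    qed
    thus ?thesis by linarith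
  qed
  show ?thesis using 1 2 by linarith
qed



lemma reg_approx:
  fixes P :: "'a::euclidean_space measure"
  assumes fm: "finite_measure P" and sP: "sets P = sets borel" and E: "E \<in> sets borel" and e: "e > 0"
  obtains K G where "compact K" "open G" "K \<subseteq> E" "E \<subseteq> G" "measure P (G - K) < e"
proof -
  interpret finite_measure P by fact
  have fin: "emeasure P (space P) \<noteq> \<infinity>" by simp
  have EP: "E \<in> sets P" using E sP by simp
  obtain K where K: "K \<subseteq> E" "compact K" "measure P E < measure P K + e/2"
  proof (cases "measure P E < e/2")
    case True
    show ?thesis by (rule that[of "{}"]) (use True in auto)
  next
    case False
    have "ennreal (measure P E - e/2) < ennreal (measure P E)"
      using False e by (subst ennreal_less_iff) auto
    also have "\<dots> = emeasure P E" by (simp add: emeasure_eq_measure)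
    also have "\<dots> = (SUP K \<in> {K. K \<subseteq> E \<and> compact K}. emeasure P K)"
      by (rule inner_regular[OF sP fin E])
    finally obtain K where K: "K \<subseteq> E" "compact K" "ennreal (measure P E - e/2) < emeasure P K"
      by (auto simp: less_SUP_iff)
    hence "ennreal (measure P E - e/2) < ennreal (measure P K)" by (simp add: emeasure_eq_measure)
    hence "measure P E - e/2 < measure P K"
      using False e by (subst (asm) ennreal_less_iff) auto
    thus ?thesis using that K by auto
  qed
  obtain G where G: "E \<subseteq> G" "open G" "measure P G < measure P E + e/2"
  proof -
    have "(INF U \<in> {U. E \<subseteq> U \<and> open U}. emeasure P U) = emeasure P E"
      by (rule outer_regular[OF sP fin E, symmetric])
    also have "\<dots> = ennreal (measure P E)" by (simp add: emeasure_eq_measure)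
    also have "\<dots> < ennreal (measure P E + e/2)" using e by (subst ennreal_less_iff) auto
    finally obtain G where G: "E \<subseteq> G" "open G" "emeasure P G < ennreal (measure P E + e/2)"
      by (auto simp: INF_less_iff)
    hence "measure P G < measure P E + e/2"
      by (simp add: emeasure_eq_measure ennreal_less_iff)
    thus ?thesis using that G by auto
  qed
  have KP: "K \<in> sets P" using K(2) sP by (simp add: compact_imp_closed borel_closed)
  have GP: "G \<in> sets P" using G(2) sP by (simp add: borel_open)
  have "measure P (G - K) = measure P G - measure P K"
    using K(1) G(1) by (intro finite_measure_Diff GP KP) auto
  also have "\<dots> < e" using K G by linarith
  finally show ?thesis using that K G by blast
qed

lemma L_ind:
  fixes P :: "'a::euclidean_space measure"
  assumes fm: "finite_measure P" and sP: "sets P = sets borel"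
   and An: "\<And>n. A n \<in> sets borel" and A0: "A0 \<in> sets borel" and E: "E \<in> sets borel"
   and H: "\<And>\<phi>::'a\<Rightarrow>real. continuous_on UNIV \<phi> \<Longrightarrow> (\<And>x. \<phi> x \<in> {0..1}) \<Longrightarrow>
      (\<lambda>n. \<integral>x. \<phi> x * indicator (A n) x \<partial>P) \<longlonglongrightarrow> (\<integral>x. \<phi> x * indicator A0 x \<partial>P)"
  shows "(\<lambda>n. measure P (E \<inter> A n)) \<longlonglongrightarrow> measure P (E \<inter> A0)"
proof (rule LIMSEQ_I)
  interpret finite_measure P by fact
  have mP: "measurable P borel = borel_measurable borel" by (rule measurable_cong_sets[OF sP refl])
  fix r :: real assume r: "r > 0"
  obtain K G where KG: "compact K" "open G" "K \<subseteq> E" "E \<subseteq> G" "measure P (G - K) < r/3"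
    using reg_approx[OF fm sP E, of "r/3"] r by auto
  obtain \<phi> :: "'a \<Rightarrow> real" where phi: "continuous_on UNIV \<phi>" "\<And>x. \<phi> x \<in> closed_segment 0 1"
    "\<And>x. x \<in> -G \<Longrightarrow> \<phi> x = 0" "\<And>x. x \<in> K \<Longrightarrow> \<phi> x = 1"
    using Urysohn[of "-G" K 0 1] KG by (auto simp: compact_imp_closed open_closed)
  have phi01: "\<And>x. \<phi> x \<in> {0..1}" using phi(2) by (simp add: closed_segment_eq_real_ivl)
  have phim: "\<phi> \<in> borel_measurable P"
    using phi(1) by (simp add: mP borel_measurable_continuous_onI)
  have GKP: "G - K \<in> sets P" using KG sP by (auto simp: compact_imp_closed borel_closed borel_open)
  have EP: "E \<in> sets P" using E sP by simp
  have approx: "\<bar>measure P (E \<inter> S) - (\<integral>x. \<phi> x * indicator S x \<partial>P)\<bar> \<le> measure P (G - K)"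
    if S: "S \<in> sets P" for S
  proof -
    have i1: "integrable P (\<lambda>x. indicator E x * indicator S x :: real)"
      by (rule integrable_const_bound[where B=1]) (use EP S in \<open>auto simp: indicator_def\<close>)
    have i2: "integrable P (\<lambda>x. \<phi> x * indicator S x)"
      by (rule integrable_const_bound[where B=1]) (use phim S phi01 in \<open>auto simp: indicator_def\<close>)
    have i3: "integrable P (indicator (G - K) :: 'a \<Rightarrow> real)"
      using GKP by (intro integrable_const_bound[where B=1]) auto
    have "measure P (E \<inter> S) = (\<integral>x. indicator E x * indicator S x \<partial>P)"
      using EP S by (simp add: indicator_inter_arith[symmetric])
    hence "measure P (E \<inter> S) - (\<integral>x. \<phi> x * indicator S x \<partial>P)
        = (\<integral>x. indicator E x * indicator S x - \<phi> x * indicator S x \<partial>P)"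
      using i1 i2 by simp
    also have "\<bar>\<dots>\<bar> \<le> (\<integral>x. \<bar>indicator E x * indicator S x - \<phi> x * indicator S x\<bar> \<partial>P)"
      by (rule integral_abs_bound)
    also have "\<dots> \<le> (\<integral>x. indicator (G - K) x \<partial>P)"
    proof (rule integral_mono)
      show "integrable P (\<lambda>x. \<bar>indicator E x * indicator S x - \<phi> x * indicator S x\<bar>)"
        using i1 i2 by auto
      show "integrable P (indicator (G - K) :: 'a \<Rightarrow> real)" by (rule i3)
      fix x
      show "\<bar>indicator E x * indicator S x - \<phi> x * indicator S x\<bar> \<le> (indicator (G - K) x :: real)"
        using phi(3)[of x] phi(4)[of x] phi01[of x] KG(3,4)
        by (cases "x \<in> S"; cases "x \<in> E"; cases "x \<in> G"; cases "x \<in> K") (auto simp: indicator_def)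
    qed
    also have "\<dots> = measure P (G - K)" using GKP by simp
    finally show ?thesis .
  qed
  have "eventually (\<lambda>n. dist (\<integral>x. \<phi> x * indicator (A n) x \<partial>P) (\<integral>x. \<phi> x * indicator A0 x \<partial>P) < r/3) sequentially"
    using H[OF phi(1) phi01] r unfolding tendsto_iff by (meson divide_pos_pos zero_less_numeral)
  then obtain N where N: "\<And>n. n \<ge> N \<Longrightarrow> \<bar>(\<integral>x. \<phi> x * indicator (A n) x \<partial>P) - (\<integral>x. \<phi> x * indicator A0 x \<partial>P)\<bar> < r/3"
    by (auto simp: eventually_sequentially dist_real_def)
  show "\<exists>no. \<forall>n\<ge>no. norm (measure P (E \<inter> A n) - measure P (E \<inter> A0)) < r"
  proof (intro exI allI impI)
    fix n assume n: "n \<ge> N"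
    have a1: "\<bar>measure P (E \<inter> A n) - (\<integral>x. \<phi> x * indicator (A n) x \<partial>P)\<bar> < r/3"
      using approx[of "A n"] An sP KG(5) by simp
    have a2: "\<bar>measure P (E \<inter> A0) - (\<integral>x. \<phi> x * indicator A0 x \<partial>P)\<bar> < r/3"
      using approx[of "A0"] A0 sP KG(5) by simp
    show "norm (measure P (E \<inter> A n) - measure P (E \<inter> A0)) < r"
      using a1 a2 N[OF n] unfolding real_norm_def by linarith
  qed
qed



lemma abs_cont_transfer:
  fixes p f :: "'a::euclidean_space \<Rightarrow> real"
  assumes pm: "p \<in> borel_measurable borel" and ppos: "\<And>x. p x > 0"
    and fm: "f \<in> borel_measurable borel" and fnn: "\<And>x. 0 \<le> f x" and fi: "integrable lborel f"
    and pi: "integrable lborel p"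
    and An: "\<And>n. A n \<in> sets borel"
    and H: "(\<lambda>n. \<integral>x. indicator (A n) x * p x \<partial>lborel) \<longlonglongrightarrow> 0"
  shows "(\<lambda>n. \<integral>x. indicator (A n) x * f x \<partial>lborel) \<longlonglongrightarrow> 0"
proof (rule LIMSEQ_I)
  fix e :: real assume e: "e > 0"
  define h where "h k x = indicator {x. f x > real k * p x} x * f x" for k :: nat and x
  have hm: "h k \<in> borel_measurable lborel" for k
    unfolding h_def using pm fm by measurable
  have hlim: "(\<lambda>k. h k x) \<longlonglongrightarrow> 0" for x
  proof (rule tendsto_eventually)
    obtain N :: nat where N: "f x / p x < real N" using reals_Archimedean2 by blast
    show "\<forall>\<^sub>F k in sequentially. h k x = 0"
      unfolding eventually_sequentially
    proof (intro exI allI impI)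
      fix k assume "N \<le> k"
      hence "f x / p x < real k" using N by (meson le_less_trans of_nat_le_iff not_less)
      hence "f x < real k * p x" using ppos[of x] by (simp add: divide_less_eq)
      thus "h k x = 0" by (simp add: h_def)
    qed
  qed
  have "(\<lambda>k. \<integral>x. h k x \<partial>lborel) \<longlonglongrightarrow> (\<integral>x. 0 \<partial>(lborel::'a measure))"
  proof (rule integral_dominated_convergence[where w=f and s=h and f="\<lambda>x. 0" and M=lborel])
    show "(\<lambda>x. 0) \<in> borel_measurable lborel" by simp
    show "\<And>i. h i \<in> borel_measurable lborel" by (rule hm)
    show "integrable lborel f" by (rule fi)
    show "AE x in lborel. (\<lambda>i. h i x) \<longlonglongrightarrow> 0" using hlim by simp
    show "\<And>i. AE x in lborel. norm (h i x) \<le> f x"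
      using fnn by (simp add: h_def indicator_def)
  qed
  hence hl0: "(\<lambda>k. \<integral>x. h k x \<partial>lborel) \<longlonglongrightarrow> 0" by simp
  then obtain k where k: "\<bar>\<integral>x. h k x \<partial>lborel\<bar> < e/2"
  proof -
    from LIMSEQ_D[OF hl0, of "e/2"] e obtain no where "\<forall>n\<ge>no. norm ((\<integral>x. h n x \<partial>lborel) - 0) < e/2" by auto
    thus ?thesis using that by auto
  qed
  have hi: "integrable lborel (h k)"
    by (rule Bochner_Integration.integrable_bound[OF fi]) (use hm fnn in \<open>auto simp: h_def indicator_def\<close>)
  have "(\<lambda>n. real k * (\<integral>x. indicator (A n) x * p x \<partial>lborel)) \<longlonglongrightarrow> real k * 0"
    by (intro tendsto_mult H tendsto_const)
  hence hk0: "(\<lambda>n. real k * (\<integral>x. indicator (A n) x * p x \<partial>lborel)) \<longlonglongrightarrow> 0" by simp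
  obtain N where N: "\<And>n. n \<ge> N \<Longrightarrow> \<bar>real k * (\<integral>x. indicator (A n) x * p x \<partial>lborel)\<bar> < e/2"
  proof -
    from LIMSEQ_D[OF hk0, of "e/2"] e obtain no where
      "\<forall>n\<ge>no. norm (real k * (\<integral>x. indicator (A n) x * p x \<partial>lborel) - 0) < e/2" by auto
    thus ?thesis using that by auto
  qed
  show "\<exists>no. \<forall>n\<ge>no. norm ((\<integral>x. indicator (A n) x * f x \<partial>lborel) - 0) < e"
  proof (intro exI allI impI)
    fix n assume n: "n \<ge> N"
    have Am: "A n \<in> sets lborel" using An by simp
    have i1: "integrable lborel (\<lambda>x. indicator (A n) x * f x)"
      by (rule Bochner_Integration.integrable_bound[OF fi]) (use Am fm fnn in \<open>auto simp: indicator_def\<close>)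
    have i2: "integrable lborel (\<lambda>x. indicator (A n) x * p x)"
      by (rule Bochner_Integration.integrable_bound[OF pi]) (use Am pm ppos in \<open>auto simp: indicator_def less_imp_le\<close>)
    have "(\<integral>x. indicator (A n) x * f x \<partial>lborel) \<le> (\<integral>x. h k x + real k * (indicator (A n) x * p x) \<partial>lborel)"
    proof (rule integral_mono[OF i1])
      show "integrable lborel (\<lambda>x. h k x + real k * (indicator (A n) x * p x))"
        using hi i2 by auto
      fix x show "indicator (A n) x * f x \<le> h k x + real k * (indicator (A n) x * p x)"
        using fnn[of x] ppos[of x] by (auto simp: h_def indicator_def)
    qed
    also have "\<dots> = (\<integral>x. h k x \<partial>lborel) + real k * (\<integral>x. indicator (A n) x * p x \<partial>lborel)"
      using hi i2 by simp
    also have "\<dots> < e" using k N[OF n] by linarith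
    finally have "(\<integral>x. indicator (A n) x * f x \<partial>lborel) < e" .
    moreover have "0 \<le> (\<integral>x. indicator (A n) x * f x \<partial>lborel)"
      by (rule integral_nonneg_AE) (use fnn in \<open>auto simp: indicator_def\<close>)
    ultimately show "norm ((\<integral>x. indicator (A n) x * f x \<partial>lborel) - 0) < e" by simp
  qed
qed



definition tent :: "'a::euclidean_space \<Rightarrow> real \<Rightarrow> 'a \<Rightarrow> real" where
  "tent x r y = max 0 (1 - dist y x / r)"

lemma tent_cont: "continuous_on UNIV (tent x r)"
  unfolding tent_def divide_inverse by (intro continuous_intros)

lemma tent_range: "tent x r y \<in> {0..1}" if "r > 0"
  using that by (auto simp: tent_def)

lemma tent_pos_dist: "tent x r y \<noteq> 0 \<Longrightarrow> r > 0 \<Longrightarrow> dist y x < r"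
  by (auto simp: tent_def max_def field_simps split: if_splits)

lemma tent_meas: "tent x r \<in> borel_measurable borel"
  by (rule borel_measurable_continuous_onI[OF tent_cont])

lemma tent_integrable:
  assumes "r > 0" shows "integrable lborel (tent x r)"
proof (rule Bochner_Integration.integrable_bound)
  show "integrable lborel (indicator (cball x r) :: 'a \<Rightarrow> real)"
    using emeasure_lborel_cball_finite[of x r] by (simp add: integrable_indicator_iff)
  show "tent x r \<in> borel_measurable lborel" using tent_meas by simp
  show "AE y in lborel. norm (tent x r y) \<le> norm (indicator (cball x r) y :: real)"
  proof (rule AE_I2)
    fix y
    show "norm (tent x r y) \<le> norm (indicator (cball x r) y :: real)"
    proof (cases "tent x r y = 0")
      case False
      hence "dist y x < r" using tent_pos_dist assms by blast
      thus ?thesis using tent_range[OF assms, of x y] by (auto simp: indicator_def dist_commute)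
    qed simp
  qed
qed

lemma tent_int_pos:
  assumes "r > 0" shows "(\<integral>y. tent x r y \<partial>lborel) > 0"
proof -
  have i2: "integrable lborel (\<lambda>y. (1/2) * (indicator (ball x (r/2)) y :: real))"
    using emeasure_lborel_ball_finite[of x "r/2"] by (simp add: integrable_indicator_iff)
  have "0 < measure lborel (ball x (r/2))" using content_ball_gt_0_iff[of x "r/2"] assms by simp
  hence "0 < (1/2) * measure lborel (ball x (r/2))" by simp
  also have "\<dots> = (\<integral>y. (1/2) * (indicator (ball x (r/2)) y :: real) \<partial>lborel)"
    by simp
  also have "\<dots> \<le> (\<integral>y. tent x r y \<partial>lborel)"
  proof (rule integral_mono[OF i2 tent_integrable[OF assms]])
    fix y show "1/2 * (indicator (ball x (r/2)) y :: real) \<le> tent x r y"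
      using tent_range[OF assms, of x y] assms
      by (auto simp: indicator_def tent_def dist_commute field_simps)
  qed
  finally show ?thesis .
qed

lemma tent_approx:
  fixes h :: "'a::euclidean_space \<Rightarrow> real"
  assumes hm: "h \<in> borel_measurable borel" and hb: "\<And>y. \<bar>h y\<bar> \<le> C"
    and hl: "C1-lipschitz_on UNIV h" and r: "r > 0"
  shows "\<bar>(\<integral>y. h y * tent x r y \<partial>lborel) - h x * (\<integral>y. tent x r y \<partial>lborel)\<bar>
           \<le> C1 * r * (\<integral>y. tent x r y \<partial>lborel)"
proof -
  have ti: "integrable lborel (tent x r)" by (rule tent_integrable[OF r])
  have i1: "integrable lborel (\<lambda>y. h y * tent x r y)"
  proof (rule Bochner_Integration.integrable_bound[where f="\<lambda>y. C * tent x r y"])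
    show "integrable lborel (\<lambda>y. C * tent x r y)" using ti by simp
    show "(\<lambda>y. h y * tent x r y) \<in> borel_measurable lborel" using hm tent_meas[of x r] by (simp add: borel_measurable_times)
    show "AE y in lborel. norm (h y * tent x r y) \<le> norm (C * tent x r y)"
    proof (rule AE_I2)
      fix y have "0 \<le> tent x r y" using tent_range[OF r, of x y] by simp
      moreover have "0 \<le> C" using hb[of y] by linarith
      ultimately show "norm (h y * tent x r y) \<le> norm (C * tent x r y)"
        using hb[of y] by (simp add: abs_mult mult_right_mono)
    qed
  qed
  have "(\<integral>y. h y * tent x r y \<partial>lborel) - h x * (\<integral>y. tent x r y \<partial>lborel)
        = (\<integral>y. (h y - h x) * tent x r y \<partial>lborel)"
    using i1 ti by (simp add: left_diff_distrib)
  also have "\<bar>\<dots>\<bar> \<le> (\<integral>y. \<bar>(h y - h x) * tent x r y\<bar> \<partial>lborel)"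
    by (rule integral_abs_bound)
  also have "\<dots> \<le> (\<integral>y. C1 * r * tent x r y \<partial>lborel)"
  proof (rule integral_mono)
    show "integrable lborel (\<lambda>y. \<bar>(h y - h x) * tent x r y\<bar>)"
      using i1 ti by (simp add: left_diff_distrib)
    show "integrable lborel (\<lambda>y. C1 * r * tent x r y)" using ti by simp
    fix y
    have t01: "0 \<le> tent x r y" using tent_range[OF r, of x y] by simp
    have C1: "0 \<le> C1" using hl by (simp add: lipschitz_on_def)
    show "\<bar>(h y - h x) * tent x r y\<bar> \<le> C1 * r * tent x r y"
    proof (cases "tent x r y = 0")
      case False
      hence d: "dist y x < r" using tent_pos_dist r by blast
      have "\<bar>h y - h x\<bar> \<le> C1 * dist y x"
        using lipschitz_onD[OF hl, of y x] by (simp add: dist_real_def)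
      also have "\<dots> \<le> C1 * r" using d C1 by (simp add: mult_left_mono)
      finally show ?thesis using t01 by (simp add: abs_mult mult_right_mono)
    qed simp
  qed
  also have "\<dots> = C1 * r * (\<integral>y. tent x r y \<partial>lborel)" by simp
  finally show ?thesis .
qed

lemma dens_pointwise:
  fixes fs :: "nat \<Rightarrow> 'a::euclidean_space \<Rightarrow> real" and f :: "'a \<Rightarrow> real"
  assumes fsm: "\<And>n. fs n \<in> borel_measurable borel" and fsb: "\<And>n y. \<bar>fs n y\<bar> \<le> C"
    and fsl: "\<And>n. C1-lipschitz_on UNIV (fs n)"
    and fm: "f \<in> borel_measurable borel" and fb: "\<And>y. \<bar>f y\<bar> \<le> C"
    and fl: "C1-lipschitz_on UNIV f" and C1: "C1 > 0"
    and H: "\<And>g. continuous_on UNIV g \<Longrightarrow> bounded (range g) \<Longrightarrow>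
      (\<lambda>n. \<integral>y. fs n y * g y \<partial>lborel) \<longlonglongrightarrow> (\<integral>y. f y * g y \<partial>lborel)"
  shows "(\<lambda>n. fs n x) \<longlonglongrightarrow> f x"
proof (rule LIMSEQ_I)
  fix e :: real assume e: "e > 0"
  define r where "r = e / (4 * C1)"
  have r: "r > 0" using e C1 by (simp add: r_def)
  define I where "I = (\<integral>y. tent x r y \<partial>lborel)"
  have I: "I > 0" unfolding I_def by (rule tent_int_pos[OF r])
  have bd: "bounded (range (tent x r))"
    unfolding bounded_iff using tent_range[OF r, of x] by (intro exI[of _ 1]) auto
  have lim: "(\<lambda>n. \<integral>y. fs n y * tent x r y \<partial>lborel) \<longlonglongrightarrow> (\<integral>y. f y * tent x r y \<partial>lborel)"
    by (rule H[OF tent_cont bd])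
  have pos: "C1 * r * I > 0" using C1 r I by simp
  obtain N where N: "\<And>n. n \<ge> N \<Longrightarrow>
      \<bar>(\<integral>y. fs n y * tent x r y \<partial>lborel) - (\<integral>y. f y * tent x r y \<partial>lborel)\<bar> < C1 * r * I"
  proof -
    from LIMSEQ_D[OF lim pos] obtain no where
      "\<forall>n\<ge>no. norm ((\<integral>y. fs n y * tent x r y \<partial>lborel) - (\<integral>y. f y * tent x r y \<partial>lborel)) < C1 * r * I"
      by auto
    thus ?thesis using that by auto
  qed
  show "\<exists>no. \<forall>n\<ge>no. norm (fs n x - f x) < e"
  proof (intro exI allI impI)
    fix n assume n: "n \<ge> N"
    have a1: "\<bar>(\<integral>y. fs n y * tent x r y \<partial>lborel) - fs n x * I\<bar> \<le> C1 * r * I"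
      unfolding I_def by (rule tent_approx[OF fsm fsb fsl r])
    have a2: "\<bar>(\<integral>y. f y * tent x r y \<partial>lborel) - f x * I\<bar> \<le> C1 * r * I"
      unfolding I_def by (rule tent_approx[OF fm fb fl r])
    have "\<bar>fs n x - f x\<bar> * I = \<bar>fs n x * I - f x * I\<bar>"
      using I by (metis abs_mult abs_of_pos left_diff_distrib)
    also have "\<dots> < (3 * C1 * r) * I" using a1 a2 N[OF n] by linarith
    finally have "\<bar>fs n x - f x\<bar> < 3 * C1 * r" using I by simp
    also have "3 * C1 * r < e" using C1 e by (simp add: r_def field_simps)
    finally show "norm (fs n x - f x) < e" by simp
  qed
qed



lemma scheffe:
  fixes fs :: "nat \<Rightarrow> 'a::euclidean_space \<Rightarrow> real" and f :: "'a \<Rightarrow> real"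
  assumes fsm: "\<And>n. fs n \<in> borel_measurable borel" and fsn: "\<And>n y. 0 \<le> fs n y"
    and fsi: "\<And>n. integrable lborel (fs n)" and fsI: "\<And>n. integral\<^sup>L lborel (fs n) = 1"
    and fm: "f \<in> borel_measurable borel" and fn: "\<And>y. 0 \<le> f y"
    and fi: "integrable lborel f" and fI: "integral\<^sup>L lborel f = 1"
    and pw: "\<And>x. (\<lambda>n. fs n x) \<longlonglongrightarrow> f x"
  shows "(\<lambda>n. \<integral>x. \<bar>fs n x - f x\<bar> \<partial>lborel) \<longlonglongrightarrow> 0"
proof -
  define g where "g n x = max (f x - fs n x) 0" for n x
  have gm: "g n \<in> borel_measurable lborel" for n unfolding g_def using fsm[of n] fm by measurable
  have "(\<lambda>n. \<integral>x. g n x \<partial>lborel) \<longlonglongrightarrow> (\<integral>x. 0 \<partial>(lborel :: 'a measure))"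
  proof (rule integral_dominated_convergence[where w=f and s=g and f="\<lambda>x. 0" and M=lborel])
    show "(\<lambda>x. 0) \<in> borel_measurable lborel" by simp
    show "\<And>i. g i \<in> borel_measurable lborel" by (rule gm)
    show "integrable lborel f" by (rule fi)
    show "AE x in lborel. (\<lambda>i. g i x) \<longlonglongrightarrow> 0"
    proof (rule AE_I2)
      fix x
      have "(\<lambda>i. max (f x - fs i x) 0) \<longlonglongrightarrow> max (f x - f x) 0"
        by (intro tendsto_intros pw)
      thus "(\<lambda>i. g i x) \<longlonglongrightarrow> 0" by (simp add: g_def)
    qed
    show "\<And>i. AE x in lborel. norm (g i x) \<le> f x"
      using fsn fn by (auto simp: g_def)
  qed
  hence g0: "(\<lambda>n. \<integral>x. g n x \<partial>lborel) \<longlonglongrightarrow> 0" by simp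
  have gi: "integrable lborel (g n)" for n
    by (rule Bochner_Integration.integrable_bound[OF fi gm]) (use fsn fn in \<open>auto simp: g_def\<close>)
  have eq: "(\<integral>x. \<bar>fs n x - f x\<bar> \<partial>lborel) = 2 * (\<integral>x. g n x \<partial>lborel)" for n
  proof -
    have "(\<integral>x. \<bar>fs n x - f x\<bar> \<partial>lborel) = (\<integral>x. (fs n x - f x) + 2 * g n x \<partial>lborel)"
      by (rule Bochner_Integration.integral_cong) (auto simp: g_def max_def abs_if)
    also have "\<dots> = (integral\<^sup>L lborel (fs n) - integral\<^sup>L lborel f) + 2 * (\<integral>x. g n x \<partial>lborel)"
      using fsi[of n] fi gi[of n] by simp
    also have "\<dots> = 2 * (\<integral>x. g n x \<partial>lborel)" using fsI fI by simp
    finally show ?thesis .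
  qed
  show ?thesis unfolding eq using tendsto_mult[OF tendsto_const g0, of 2] by simp
qed



lemma meas_dens:
  fixes p :: "'a::euclidean_space \<Rightarrow> real"
  assumes pm: "p \<in> borel_measurable borel" and pn: "\<And>x. 0 \<le> p x"
    and Pp: "prob_space (density lborel (\<lambda>x. ennreal (p x)))" and A: "A \<in> sets borel"
  shows "measure (density lborel (\<lambda>x. ennreal (p x))) A = (\<integral>x. indicator A x * p x \<partial>lborel)"
proof -
  interpret prob_space "density lborel (\<lambda>x. ennreal (p x))" by fact
  have "measure (density lborel (\<lambda>x. ennreal (p x))) A
      = integral\<^sup>L (density lborel (\<lambda>x. ennreal (p x))) (indicator A)"
    using A by (simp add: emeasure_eq_measure)
  also have "\<dots> = (\<integral>x. p x *\<^sub>R indicator A x \<partial>lborel)"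
    by (rule integral_density) (use pm pn A in auto)
  finally show ?thesis by (simp add: mult.commute)
qed

lemma cell_conv:
  fixes P :: "'a::euclidean_space measure" and p :: "'a \<Rightarrow> real"
    and Qs :: "nat \<Rightarrow> 'a \<Rightarrow> nat" and Q :: "'a \<Rightarrow> nat" and f :: "'a \<Rightarrow> real"
  assumes P_prob: "prob_space P"
    and p_meas: "p \<in> borel_measurable borel" and p_pos: "\<And>x. p x > 0"
    and P_dens: "P = density lborel (\<lambda>x. ennreal (p x))"
    and Qsm: "\<And>n. Qs n \<in> borel_measurable borel" and Qm: "Q \<in> borel_measurable borel"
    and W: "weak_conv_seq (\<lambda>n. joint_meas P (Qs n)) (joint_meas P Q)"
    and fm: "f \<in> borel_measurable borel" and fn: "\<And>x. 0 \<le> f x" and fi: "integrable lborel f"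
  shows "(\<lambda>n. \<integral>x. indicator (Qs n -` {i} - Q -` {i}) x * f x \<partial>lborel) \<longlonglongrightarrow> 0"
    and "(\<lambda>n. \<integral>x. indicator (Q -` {i} - Qs n -` {i}) x * f x \<partial>lborel) \<longlonglongrightarrow> 0"
proof -
  interpret P: prob_space P by fact
  have pn: "\<And>x. 0 \<le> p x" using p_pos less_imp_le by blast
  have pi: "integrable lborel p" using dens_int(1)[of p] P_prob P_dens p_meas pn by simp
  have sP: "sets P = sets borel" using P_dens by simp
  have mP: "\<And>N. measurable P N = measurable borel N" by (rule measurable_cong_sets[OF sP refl])
  define Bn where "Bn n = Qs n -` {i}" for n
  define B where "B = Q -` {i}"
  have Bn_s: "Bn n \<in> sets borel" for n
    using measurable_sets[OF Qsm[of n], of "{i}"] by (simp add: Bn_def)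
  have B_s: "B \<in> sets borel"
    using measurable_sets[OF Qm, of "{i}"] by (simp add: B_def)
  have H: "(\<lambda>n. \<integral>x. \<phi> x * indicator (Bn n) x \<partial>P) \<longlonglongrightarrow> (\<integral>x. \<phi> x * indicator B x \<partial>P)"
    if phic: "continuous_on UNIV \<phi>" and phi01: "\<And>x. \<phi> x \<in> {0..1}" for \<phi> :: "'a \<Rightarrow> real"
  proof -
    define \<psi> :: "nat \<Rightarrow> real" where "\<psi> j = (if j = i then 1 else 0)" for j
    define g :: "'a \<times> nat \<Rightarrow> real" where "g z = \<phi> (fst z) * \<psi> (snd z)" for z
    have gc: "continuous_on UNIV g"
    proof -
      have c1: "continuous_on UNIV (\<lambda>z::'a\<times>nat. \<phi> (fst z))"
        by (rule continuous_on_compose2[OF phic continuous_on_fst]) auto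
      have psic: "continuous_on UNIV \<psi>" by (rule Topological_Spaces.continuous_on_discrete)
      have c2: "continuous_on UNIV (\<lambda>z::'a\<times>nat. \<psi> (snd z))"
        by (rule continuous_on_compose2[OF psic continuous_on_snd]) auto
      show ?thesis unfolding g_def by (rule continuous_on_mult[OF c1 c2])
    qed
    have gb: "bounded (range g)"
      unfolding bounded_iff using phi01 by (intro exI[of _ 1]) (auto simp: g_def \<psi>_def)
    have gm: "g \<in> borel_measurable borel" by (rule borel_measurable_continuous_onI[OF gc])
    have pair: "(\<lambda>x. (x, R x)) \<in> measurable P borel" if "R \<in> borel_measurable borel" for R :: "'a \<Rightarrow> nat"
    proof -
      have "(\<lambda>x. (x, R x)) \<in> measurable borel (borel \<Otimes>\<^sub>M borel)"
        by (rule measurable_Pair) (use that in auto)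
      thus ?thesis by (simp add: mP borel_prod)
    qed
    have conv: "\<integral>z. g z \<partial>joint_meas P R = (\<integral>x. \<phi> x * indicator (R -` {i}) x \<partial>P)"
      if "R \<in> borel_measurable borel" for R :: "'a \<Rightarrow> nat"
      unfolding joint_meas_def
      by (subst integral_distr[OF pair[OF that] gm]) (auto simp: g_def \<psi>_def indicator_def of_bool_def)
    have "(\<lambda>n. \<integral>z. g z \<partial>joint_meas P (Qs n)) \<longlonglongrightarrow> \<integral>z. g z \<partial>joint_meas P Q"
      using W gc gb unfolding weak_conv_seq_def by blast
    thus ?thesis unfolding conv[OF Qsm] conv[OF Qm] Bn_def B_def .
  qed
  have fmP: "finite_measure P" by (rule P.finite_measure_axioms)
  have L1: "(\<lambda>n. measure P (B \<inter> Bn n)) \<longlonglongrightarrow> measure P (B \<inter> B)"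
    by (rule L_ind[OF fmP sP Bn_s B_s B_s H]) auto
  have L2: "(\<lambda>n. measure P (UNIV \<inter> Bn n)) \<longlonglongrightarrow> measure P (UNIV \<inter> B)"
    by (rule L_ind[OF fmP sP Bn_s B_s _ H]) auto
  have BnP: "Bn n \<in> sets P" for n using Bn_s sP by simp
  have BP: "B \<in> sets P" using B_s sP by simp
  have d1: "measure P (Bn n - B) = measure P (Bn n) - measure P (B \<inter> Bn n)" for n
    using P.finite_measure_Diff'[OF BnP BP] by (simp add: Int_commute)
  have d2: "measure P (B - Bn n) = measure P B - measure P (B \<inter> Bn n)" for n
    using P.finite_measure_Diff'[OF BP BnP] by simp
  have m1: "(\<lambda>n. measure P (Bn n - B)) \<longlonglongrightarrow> 0"
    unfolding d1 using tendsto_diff[OF L2 L1] by simp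
  have m2: "(\<lambda>n. measure P (B - Bn n)) \<longlonglongrightarrow> 0"
    unfolding d2 using tendsto_diff[OF tendsto_const[of "measure P B"] L1] by simp
  have Pp: "prob_space (density lborel (\<lambda>x. ennreal (p x)))" using P_prob P_dens by simp
  have md: "measure P A = (\<integral>x. indicator A x * p x \<partial>lborel)" if "A \<in> sets borel" for A
    unfolding P_dens by (rule meas_dens[OF p_meas pn Pp that])
  show "(\<lambda>n. \<integral>x. indicator (Qs n -` {i} - Q -` {i}) x * f x \<partial>lborel) \<longlonglongrightarrow> 0"
    unfolding Bn_def[symmetric] B_def[symmetric]
    by (rule abs_cont_transfer[OF p_meas p_pos fm fn fi pi])
       (use Bn_s B_s m1 md in auto)
  show "(\<lambda>n. \<integral>x. indicator (Q -` {i} - Qs n -` {i}) x * f x \<partial>lborel) \<longlonglongrightarrow> 0"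
    unfolding Bn_def[symmetric] B_def[symmetric]
    by (rule abs_cont_transfer[OF p_meas p_pos fm fn fi pi])
       (use Bn_s B_s m2 md in auto)
qed



lemma cell_bound:
  fixes g f c :: "'a::euclidean_space \<Rightarrow> real"
  assumes gm: "g \<in> borel_measurable borel" and gn: "\<And>x. 0 \<le> g x" and gi: "integrable lborel g"
    and fm: "f \<in> borel_measurable borel" and fn: "\<And>x. 0 \<le> f x" and fi: "integrable lborel f"
    and cm: "c \<in> borel_measurable borel" and cb: "\<And>x. \<bar>c x\<bar> \<le> K"
    and S: "S \<in> sets borel" and T: "T \<in> sets borel"
  shows "\<bar>(\<integral>x. g x * (indicator S x * c x) \<partial>lborel) - (\<integral>x. f x * (indicator T x * c x) \<partial>lborel)\<bar>
     \<le> K * (\<integral>x. \<bar>g x - f x\<bar> \<partial>lborel) + K * ((\<integral>x. indicator (S - T) x * f x \<partial>lborel) + (\<integral>x. indicator (T - S) x * f x \<partial>lborel))"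
proof -
  have K: "0 \<le> K" using cb[of undefined] by linarith
  have Sl: "S \<in> sets lborel" and Tl: "T \<in> sets lborel" using S T by auto
  have i1: "integrable lborel (\<lambda>x. g x * (indicator S x * c x))"
  proof (rule Bochner_Integration.integrable_bound[where f="\<lambda>x. K * g x"])
    show "integrable lborel (\<lambda>x. K * g x)" using gi by simp
    show "(\<lambda>x. g x * (indicator S x * c x)) \<in> borel_measurable lborel"
      using gm cm Sl by (intro borel_measurable_times borel_measurable_indicator) auto
    show "AE x in lborel. norm (g x * (indicator S x * c x)) \<le> norm (K * g x)"
    proof (rule AE_I2)
      fix x
      have "\<bar>g x * (indicator S x * c x)\<bar> \<le> g x * \<bar>c x\<bar>"
        using gn[of x] by (simp add: abs_mult indicator_def)
      also have "\<dots> \<le> g x * K" by (rule mult_left_mono[OF cb gn])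
      finally show "norm (g x * (indicator S x * c x)) \<le> norm (K * g x)"
        using gn[of x] K by (simp add: mult.commute)
    qed
  qed
  have i2: "integrable lborel (\<lambda>x. f x * (indicator T x * c x))"
  proof (rule Bochner_Integration.integrable_bound[where f="\<lambda>x. K * f x"])
    show "integrable lborel (\<lambda>x. K * f x)" using fi by simp
    show "(\<lambda>x. f x * (indicator T x * c x)) \<in> borel_measurable lborel"
      using fm cm Tl by (intro borel_measurable_times borel_measurable_indicator) auto
    show "AE x in lborel. norm (f x * (indicator T x * c x)) \<le> norm (K * f x)"
    proof (rule AE_I2)
      fix x
      have "\<bar>f x * (indicator T x * c x)\<bar> \<le> f x * \<bar>c x\<bar>"
        using fn[of x] by (simp add: abs_mult indicator_def)
      also have "\<dots> \<le> f x * K" by (rule mult_left_mono[OF cb fn])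
      finally show "norm (f x * (indicator T x * c x)) \<le> norm (K * f x)"
        using fn[of x] K by (simp add: mult.commute)
    qed
  qed
  have i3: "integrable lborel (\<lambda>x. \<bar>g x - f x\<bar>)" using gi fi by auto
  have i4: "integrable lborel (\<lambda>x. indicator A x * f x)" if "A \<in> sets borel" for A
    by (rule Bochner_Integration.integrable_bound[OF fi]) (use that fm fn in \<open>auto simp: indicator_def\<close>)
  have "\<bar>(\<integral>x. g x * (indicator S x * c x) \<partial>lborel) - (\<integral>x. f x * (indicator T x * c x) \<partial>lborel)\<bar>
      = \<bar>\<integral>x. g x * (indicator S x * c x) - f x * (indicator T x * c x) \<partial>lborel\<bar>"
    using i1 i2 by simp
  also have "\<dots> \<le> (\<integral>x. \<bar>g x * (indicator S x * c x) - f x * (indicator T x * c x)\<bar> \<partial>lborel)"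
    by (rule integral_abs_bound)
  also have "\<dots> \<le> (\<integral>x. K * \<bar>g x - f x\<bar> + K * (indicator (S - T) x * f x + indicator (T - S) x * f x) \<partial>lborel)"
  proof (rule integral_mono)
    show "integrable lborel (\<lambda>x. \<bar>g x * (indicator S x * c x) - f x * (indicator T x * c x)\<bar>)"
      using i1 i2 by auto
    show "integrable lborel (\<lambda>x. K * \<bar>g x - f x\<bar> + K * (indicator (S - T) x * f x + indicator (T - S) x * f x))"
      using i3 i4[of "S - T"] i4[of "T - S"] S T by auto
    fix x
    have cx: "\<bar>c x\<bar> \<le> K" by (rule cb)
    have g0: "0 \<le> g x" and f0: "0 \<le> f x" by (rule gn, rule fn)
    show "\<bar>g x * (indicator S x * c x) - f x * (indicator T x * c x)\<bar>
        \<le> K * \<bar>g x - f x\<bar> + K * (indicator (S - T) x * f x + indicator (T - S) x * f x)"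
    proof (cases "x \<in> S"; cases "x \<in> T")
      assume "x \<in> S" "x \<in> T"
      hence "\<bar>g x * (indicator S x * c x) - f x * (indicator T x * c x)\<bar> = \<bar>g x - f x\<bar> * \<bar>c x\<bar>"
        by (simp add: abs_mult[symmetric] left_diff_distrib)
      also have "\<dots> \<le> \<bar>g x - f x\<bar> * K" by (rule mult_left_mono[OF cx]) simp
      finally show ?thesis using \<open>x \<in> S\<close> \<open>x \<in> T\<close> by (simp add: mult.commute)
    next
      assume "x \<in> S" "x \<notin> T"
      hence "\<bar>g x * (indicator S x * c x) - f x * (indicator T x * c x)\<bar> = g x * \<bar>c x\<bar>"
        using g0 by (simp add: abs_mult)
      also have "\<dots> \<le> g x * K" by (rule mult_left_mono[OF cx g0])
      also have "\<dots> \<le> (\<bar>g x - f x\<bar> + f x) * K" by (rule mult_right_mono[OF _ K]) linarith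
      finally show ?thesis using \<open>x \<in> S\<close> \<open>x \<notin> T\<close> by (simp add: algebra_simps)
    next
      assume "x \<notin> S" "x \<in> T"
      hence "\<bar>g x * (indicator S x * c x) - f x * (indicator T x * c x)\<bar> = f x * \<bar>c x\<bar>"
        using f0 by (simp add: abs_mult)
      also have "\<dots> \<le> f x * K" by (rule mult_left_mono[OF cx f0])
      moreover have "0 \<le> K * \<bar>g x - f x\<bar>" using K by simp
      ultimately show ?thesis using \<open>x \<notin> S\<close> \<open>x \<in> T\<close> by (simp add: algebra_simps)
    next
      assume "x \<notin> S" "x \<notin> T"
      thus ?thesis using K by simp
    qed
  qed
  also have "\<dots> = K * (\<integral>x. \<bar>g x - f x\<bar> \<partial>lborel) + K * ((\<integral>x. indicator (S - T) x * f x \<partial>lborel) + (\<integral>x. indicator (T - S) x * f x \<partial>lborel))"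
    using i3 i4[of "S - T"] i4[of "T - S"] S T by auto
  finally show ?thesis .
qed



theorem lemma4:
  fixes C C1 :: real and M :: nat
    and U :: "'b::euclidean_space set"
    and c0 :: "'a::euclidean_space \<Rightarrow> 'b \<Rightarrow> real"
    and P :: "'a measure" and p :: "'a \<Rightarrow> real"
  assumes C_pos: "C > 0" and C1_pos: "C1 > 0"
    and U_compact: "compact U"
    and c0_cont: "continuous_on (UNIV \<times> U) (\<lambda>(x, u). c0 x u)"
    and c0_nonneg: "\<And>x u. u \<in> U \<Longrightarrow> 0 \<le> c0 x u"
    and c0_bdd: "bounded ((\<lambda>(x, u). c0 x u) ` (UNIV \<times> U))"
    and P_prob: "prob_space P"
    and p_meas: "p \<in> borel_measurable borel" and p_pos: "\<And>x. p x > 0"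
    and P_dens: "P = density lborel (\<lambda>x. ennreal (p x))"
  shows "\<forall>\<pi>s \<pi> Qs Q.
           (\<forall>n. \<pi>s n \<in> S_class C C1) \<and> \<pi> \<in> S_class C C1 \<and>
           (\<forall>n. Qs n \<in> Qc M) \<and> Q \<in> Qc M \<and>
           weak_conv_seq \<pi>s \<pi> \<and>
           weak_conv_seq (\<lambda>n. joint_meas P (Qs n)) (joint_meas P Q)
           \<longrightarrow> (\<lambda>n. cost c0 U M (\<pi>s n) (Qs n)) \<longlonglongrightarrow> cost c0 U M \<pi> Q"
proof (intro allI impI)
  fix \<pi>s :: "nat \<Rightarrow> 'a measure" and \<pi> :: "'a measure" and Qs :: "nat \<Rightarrow> 'a \<Rightarrow> nat" and Q :: "'a \<Rightarrow> nat"
  assume hyp: "(\<forall>n. \<pi>s n \<in> S_class C C1) \<and> \<pi> \<in> S_class C C1 \<and>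
           (\<forall>n. Qs n \<in> Qc M) \<and> Q \<in> Qc M \<and>
           weak_conv_seq \<pi>s \<pi> \<and>
           weak_conv_seq (\<lambda>n. joint_meas P (Qs n)) (joint_meas P Q)"
  have "\<forall>n. \<exists>g. g \<in> borel_measurable borel \<and> (\<forall>x. 0 \<le> g x \<and> g x \<le> C) \<and>
        C1-lipschitz_on UNIV g \<and> \<pi>s n = density lborel (\<lambda>x. ennreal (g x))"
    using hyp by (auto simp: S_class_def)
  then obtain fs where fs: "\<And>n. fs n \<in> borel_measurable borel \<and> (\<forall>x. 0 \<le> fs n x \<and> fs n x \<le> C) \<and>
        C1-lipschitz_on UNIV (fs n) \<and> \<pi>s n = density lborel (\<lambda>x. ennreal (fs n x))"
    by metis
  obtain f where f: "f \<in> borel_measurable borel" "\<And>x. 0 \<le> f x" "\<And>x. f x \<le> C"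
      "C1-lipschitz_on UNIV f" "\<pi> = density lborel (\<lambda>x. ennreal (f x))"
    using hyp by (auto simp: S_class_def)
  have fsm: "\<And>n. fs n \<in> borel_measurable borel" and fsn: "\<And>n x. 0 \<le> fs n x"
    and fsC: "\<And>n x. fs n x \<le> C" and fsl: "\<And>n. C1-lipschitz_on UNIV (fs n)"
    and fsd: "\<And>n. \<pi>s n = density lborel (\<lambda>x. ennreal (fs n x))"
    using fs by auto
  have \<pi>sp: "\<And>n. prob_space (\<pi>s n)" and \<pi>p: "prob_space \<pi>" using hyp by (auto simp: S_class_def)
  have fsi: "\<And>n. integrable lborel (fs n)" and fsI: "\<And>n. integral\<^sup>L lborel (fs n) = 1"
    using dens_int[of "fs n" for n] \<pi>sp fsd fsm fsn by auto
  have fi: "integrable lborel f" and fI: "integral\<^sup>L lborel f = 1"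
    using dens_int[of f] \<pi>p f by auto
  have Qsm: "\<And>n. Qs n \<in> borel_measurable borel" and Qm: "Q \<in> borel_measurable borel"
    using hyp by (auto simp: Qc_def)
  have W1: "weak_conv_seq \<pi>s \<pi>" and W2: "weak_conv_seq (\<lambda>n. joint_meas P (Qs n)) (joint_meas P Q)"
    using hyp by auto
  have Hw: "(\<lambda>n. \<integral>y. fs n y * g y \<partial>lborel) \<longlonglongrightarrow> (\<integral>y. f y * g y \<partial>lborel)"
    if gc: "continuous_on UNIV g" and gb: "bounded (range g)" for g :: "'a \<Rightarrow> real"
  proof -
    have gm: "g \<in> borel_measurable lborel" using borel_measurable_continuous_onI[OF gc] by simp
    have e1: "(\<integral>y. g y \<partial>\<pi>s n) = (\<integral>y. fs n y * g y \<partial>lborel)" for n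
      unfolding fsd using integral_density[OF gm, of "fs n"] fsm fsn by simp
    have e2: "(\<integral>y. g y \<partial>\<pi>) = (\<integral>y. f y * g y \<partial>lborel)"
      unfolding f(5) using integral_density[OF gm, of f] f by simp
    have "(\<lambda>n. \<integral>y. g y \<partial>\<pi>s n) \<longlonglongrightarrow> (\<integral>y. g y \<partial>\<pi>)"
      using W1 gc gb unfolding weak_conv_seq_def by blast
    thus ?thesis unfolding e1 e2 .
  qed
  have fsb: "\<And>n y. \<bar>fs n y\<bar> \<le> C" using fsn fsC by (simp add: abs_le_iff)
  have fb: "\<And>y. \<bar>f y\<bar> \<le> C" using f(2,3) by (simp add: abs_le_iff)
  have pw: "\<And>x. (\<lambda>n. fs n x) \<longlonglongrightarrow> f x"
    by (rule dens_pointwise[OF fsm fsb fsl f(1) fb f(4) C1_pos Hw])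
  have L1: "(\<lambda>n. \<integral>x. \<bar>fs n x - f x\<bar> \<partial>lborel) \<longlonglongrightarrow> 0"
    by (rule scheffe[OF fsm fsn fsi fsI f(1) f(2) fi fI pw])
  show "(\<lambda>n. cost c0 U M (\<pi>s n) (Qs n)) \<longlonglongrightarrow> cost c0 U M \<pi> Q"
  proof (cases "U = {}")
    case True
    thus ?thesis by (simp add: cost_def)
  next
    case Une: False
    obtain K where K: "\<And>x u. u \<in> U \<Longrightarrow> \<bar>c0 x u\<bar> \<le> K"
      using c0_bdd unfolding bounded_iff by force
    have c0c: "continuous_on UNIV (\<lambda>x. c0 x u)" if u: "u \<in> U" for u
    proof -
      have "continuous_on UNIV (\<lambda>x. (\<lambda>(x, u). c0 x u) (x, u))"
        by (rule continuous_on_compose2[OF c0_cont continuous_on_Pair[OF continuous_on_id continuous_on_const]])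
           (use u in auto)
      thus ?thesis by simp
    qed
    have c0m: "(\<lambda>x. c0 x u) \<in> borel_measurable borel" if "u \<in> U" for u
      by (rule borel_measurable_continuous_onI[OF c0c[OF that]])
    define a where "a n i u = (LINT x:(Qs n -` {i})|\<pi>s n. c0 x u)" for n i u
    define a0 where "a0 i u = (LINT x:(Q -` {i})|\<pi>. c0 x u)" for i u
    have ae: "a n i u = (\<integral>x. fs n x * (indicator (Qs n -` {i}) x * c0 x u) \<partial>lborel)" if "u \<in> U" for n i u
    proof -
      have m: "(\<lambda>x. indicator (Qs n -` {i}) x *\<^sub>R c0 x u) \<in> borel_measurable lborel"
        using c0m[OF that] measurable_sets[OF Qsm[of n], of "{i}"]
        by (intro borel_measurable_scaleR borel_measurable_indicator) auto
      show ?thesis unfolding a_def set_lebesgue_integral_def fsd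
        using integral_density[OF m, of "fs n"] fsm fsn by simp
    qed
    have a0e: "a0 i u = (\<integral>x. f x * (indicator (Q -` {i}) x * c0 x u) \<partial>lborel)" if "u \<in> U" for i u
    proof -
      have m: "(\<lambda>x. indicator (Q -` {i}) x *\<^sub>R c0 x u) \<in> borel_measurable lborel"
        using c0m[OF that] measurable_sets[OF Qm, of "{i}"]
        by (intro borel_measurable_scaleR borel_measurable_indicator) auto
      show ?thesis unfolding a0_def set_lebesgue_integral_def f(5)
        using integral_density[OF m, of f] f by simp
    qed
    define \<delta> where "\<delta> n i = K * (\<integral>x. \<bar>fs n x - f x\<bar> \<partial>lborel) + K * ((\<integral>x. indicator (Qs n -` {i} - Q -` {i}) x * f x \<partial>lborel) + (\<integral>x. indicator (Q -` {i} - Qs n -` {i}) x * f x \<partial>lborel))" for n i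
    have \<delta>0: "(\<lambda>n. \<delta> n i) \<longlonglongrightarrow> 0" for i
    proof -
      have "(\<lambda>n. \<delta> n i) \<longlonglongrightarrow> K * 0 + K * (0 + 0)"
        unfolding \<delta>_def
        by (intro tendsto_intros L1 cell_conv[OF P_prob p_meas p_pos P_dens Qsm Qm W2 f(1) f(2) fi])
      thus ?thesis by simp
    qed
    have conv_i: "(\<lambda>n. INF u\<in>U. a n i u) \<longlonglongrightarrow> (INF u\<in>U. a0 i u)" for i
    proof (rule LIM_zero_cancel, rule Lim_null_comparison[OF _ \<delta>0[of i]], rule always_eventually, rule allI)
      fix n
      show "norm ((INF u\<in>U. a n i u) - (INF u\<in>U. a0 i u)) \<le> \<delta> n i"
        unfolding real_norm_def
      proof (rule INF_close[OF Une])
        fix u assume u: "u \<in> U"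
        have Bs: "Qs n -` {i} \<in> sets borel" "Q -` {i} \<in> sets borel"
          using measurable_sets[OF Qsm[of n], of "{i}"] measurable_sets[OF Qm, of "{i}"] by auto
        show "\<bar>a n i u - a0 i u\<bar> \<le> \<delta> n i"
          unfolding ae[OF u] a0e[OF u] \<delta>_def
          by (rule cell_bound[OF fsm fsn fsi f(1) f(2) fi c0m[OF u] K[OF u] Bs])
        show "0 \<le> a n i u" unfolding ae[OF u]
          by (rule integral_nonneg_AE) (use fsn c0_nonneg[OF u] in \<open>auto simp: indicator_def\<close>)
        show "0 \<le> a0 i u" unfolding a0e[OF u]
          by (rule integral_nonneg_AE) (use f(2) c0_nonneg[OF u] in \<open>auto simp: indicator_def\<close>)
      qed
    qed
    have "(\<lambda>n. \<Sum>i=1..M. INF u\<in>U. a n i u) \<longlonglongrightarrow> (\<Sum>i=1..M. INF u\<in>U. a0 i u)"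
      by (intro tendsto_sum conv_i)
    thus ?thesis unfolding cost_def a_def a0_def .
  qed
qed


end
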